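(* Let $\mathcal H$ be a Hilbert space and $\mathcal S,\mathcal A\subseteq\mathcal H$ closed subspaces with $\mathcal S,\mathcal A,\mathcal S^\perp,\mathcal A^\perp$ nonzero and $\mathcal A\oplus\mathcal S^\perp=\mathcal H$. Fix $\lambda\in[0,1]$, let $B:=\lambda P_{\mathcal A\mathcal S^\perp}+(1-\lambda)P_{\mathcal S}$ and $\mathcal B:=\mathcal R(B)$. Then $$\frac{1}{1+\lambda^2\frac{\sin^2(\mathcal A,\mathcal S)}{\cos^2(\mathcal A,\mathcal S)}}\le\cos^2(\mathcal B,\mathcal S)\le\frac{1}{1+\lambda^2\frac{\cos^2(\mathcal A,\mathcal S^\perp)}{\sin^2(\mathcal A,\mathcal S^\perp)}}.$$ In particular $\cos(\mathcal B,\mathcal S)\ge\cos(\mathcal A,\mathcal S)$.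
   Context: $P_{\mathcal V}$ is the orthogonal projection onto a closed subspace $\mathcal V$, $\mathcal V^\perp$ its orthogonal complement, $\mathcal R(\cdot)$ the range. For closed subspaces with $\mathcal V_1\oplus\mathcal V_2=\mathcal H$, $P_{\mathcal V_1\mathcal V_2}$ is the oblique projection onto $\mathcal V_1$ along $\mathcal V_2$ (identity on $\mathcal V_1$, zero on $\mathcal V_2$). Angles between nonzero closed subspaces: $\cos(\mathcal V_1,\mathcal V_2):=\inf_{0\ne x\in\mathcal V_1}\|P_{\mathcal V_2}x\|/\|x\|$, $\sin(\mathcal V_1,\mathcal V_2):=\sup_{0\ne x\in\mathcal V_1}\|P_{\mathcal V_2^\perp}x\|/\|x\|$. *)

theory Defs
  imports "HOL-Analysis.Analysis"
begin

definition oproj :: "'a::real_inner set \<Rightarrow> 'a \<Rightarrow> 'a" where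
  "oproj V x = (THE v. v \<in> V \<and> x - v \<in> orthogonal_comp V)"

definition obproj :: "'a::real_vector set \<Rightarrow> 'a set \<Rightarrow> 'a \<Rightarrow> 'a" where
  "obproj V1 V2 x = (THE v. v \<in> V1 \<and> x - v \<in> V2)"

definition direct_sum_UNIV :: "'a::real_vector set \<Rightarrow> 'a set \<Rightarrow> bool" where
  "direct_sum_UNIV V1 V2 \<longleftrightarrow> V1 \<inter> V2 = {0} \<and> (\<forall>x. \<exists>a\<in>V1. \<exists>b\<in>V2. x = a + b)"

definition cos_angle :: "'a::real_inner set \<Rightarrow> 'a set \<Rightarrow> real" where
  "cos_angle V1 V2 = Inf {norm (oproj V2 x) / norm x | x. x \<in> V1 \<and> x \<noteq> 0}"

definition sin_angle :: "'a::real_inner set \<Rightarrow> 'a set \<Rightarrow> real" where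
  "sin_angle V1 V2 = Sup {norm (oproj (orthogonal_comp V2) x) / norm x | x. x \<in> V1 \<and> x \<noteq> 0}"

end

theory Submission
  imports Defs
begin


lemma closed_orth: "closed (orthogonal_comp (V::'a::real_inner set))"
proof -
  have "orthogonal_comp V = (\<Inter>y\<in>V. {x. inner y x = 0})"
    by (auto simp: orthogonal_comp_def orthogonal_def)
  moreover have "closed (\<Inter>y\<in>V. {x::'a. inner y x = 0})"
    by (intro closed_INT ballI closed_Collect_eq continuous_intros)
  ultimately show ?thesis by simp
qed

lemma orth_self_zero:
  fixes x :: "'a::real_inner"
  assumes "x \<in> V" "x \<in> orthogonal_comp V" shows "x = 0"
  using assms by (auto simp: orthogonal_comp_def orthogonal_def)

lemma oproj_eq:
  fixes V :: "'a::real_inner set"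
  assumes "subspace V" "v \<in> V" "x - v \<in> orthogonal_comp V"
  shows "oproj V x = v"
  unfolding oproj_def
proof (rule the_equality)
  show "v \<in> V \<and> x - v \<in> orthogonal_comp V" using assms by blast
  fix v' assume h: "v' \<in> V \<and> x - v' \<in> orthogonal_comp V"
  have "v' - v \<in> V" using h assms by (simp add: subspace_diff)
  moreover have "v' - v = (x - v) - (x - v')" by simp
  hence "v' - v \<in> orthogonal_comp V" using h assms subspace_orthogonal_comp
    by (metis subspace_diff)
  ultimately show "v' = v" using orth_self_zero by fastforce
qed

lemma parallelogram:
  fixes u v :: "'a::real_inner"
  shows "norm (u+v)^2 + norm (u-v)^2 = 2*norm u^2 + 2*norm v^2"
  by (simp add: power2_norm_eq_inner inner_add inner_diff inner_commute algebra_simps)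

lemma proj_exists:
  fixes S :: "'a::{real_inner,complete_space} set"
  assumes S: "subspace S" "closed S"
  shows "\<exists>v\<in>S. x - v \<in> orthogonal_comp S"
proof -
  define d where "d = infdist x S"
  have ne: "S \<noteq> {}" using S subspace_0 by blast
  have d0: "0 \<le> d" unfolding d_def by (rule infdist_nonneg)
  have dle: "d \<le> norm (x - s)" if "s \<in> S" for s
    using infdist_le[OF that, of x] by (simp add: d_def dist_norm)
  have "\<exists>s\<in>S. norm (x - s) < d + inverse (real (Suc n))" for n
  proof -
    have "(INF a\<in>S. dist x a) < d + inverse (real (Suc n))"
      using infdist_notempty[OF ne, of x] d_def by simp
    moreover have bdd: "bdd_below ((\<lambda>a. dist x a) ` S)" by simp
    ultimately obtain s where "s \<in> S" "dist x s < d + inverse (real (Suc n))"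
      using cINF_less_iff[OF ne bdd] by blast
    then show ?thesis by (auto simp: dist_norm)
  qed
  then obtain sq where sq: "\<And>n. sq n \<in> S" "\<And>n. norm (x - sq n) < d + inverse (real (Suc n))"
    by metis
  have key: "norm (a - b)^2 \<le> 2*(2*d+1)*(e1+e2)"
    if ab: "a \<in> S" "b \<in> S" and e: "0 \<le> e1" "e1 \<le> 1" "0 \<le> e2" "e2 \<le> 1"
      and n1: "norm (x - a) \<le> d + e1" and n2: "norm (x - b) \<le> d + e2" for a b e1 e2
  proof -
    have mid: "(1/2) *\<^sub>R (a + b) \<in> S" using ab S by (simp add: subspace_add subspace_scale)
    have "2 * d \<le> 2 * norm (x - (1/2) *\<^sub>R (a + b))" using dle[OF mid] by simp
    also have "\<dots> = norm ((x - a) + (x - b))"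
    proof -
      have "(x - a) + (x - b) = 2 *\<^sub>R (x - (1/2) *\<^sub>R (a + b))" by (simp add: algebra_simps scaleR_2)
      thus ?thesis by simp
    qed
    finally have m: "2*d \<le> norm ((x - a) + (x - b))" .
    have p: "norm ((x - a) + (x - b))^2 + norm ((x - a) - (x - b))^2 = 2*norm (x-a)^2 + 2*norm (x-b)^2"
      by (rule parallelogram)
    have "norm ((x - a) - (x - b)) = norm (a - b)" by (simp add: norm_minus_commute)
    moreover have "(2*d)^2 \<le> norm ((x - a) + (x - b))^2" using m d0 by (intro power_mono) auto
    moreover have "norm (x-a)^2 \<le> (d+e1)^2" using n1 by (intro power_mono) auto
    moreover have "norm (x-b)^2 \<le> (d+e2)^2" using n2 by (intro power_mono) auto
    moreover have "e1^2 \<le> e1" "e2^2 \<le> e2" using e by (auto simp: power2_eq_square mult_le_cancel_right1 mult_left_le)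
    ultimately show ?thesis using p d0 e by (simp add: power2_eq_square algebra_simps) 
  qed
  have "Cauchy sq"
  proof (rule CauchyI)
    fix e :: real assume "0 < e"
    have "0 < e^2 / (4*(2*d+1))" using \<open>0<e\<close> d0 by simp
    then obtain M where M: "inverse (real (Suc M)) < e^2 / (4*(2*d+1))" using reals_Archimedean by blast
    show "\<exists>M. \<forall>m\<ge>M. \<forall>n\<ge>M. norm (sq m - sq n) < e"
    proof (intro exI allI impI)
      fix m n assume mn: "M \<le> m" "M \<le> n"
      have im: "inverse (real (Suc m)) \<le> inverse (real (Suc M))" "inverse (real (Suc n)) \<le> inverse (real (Suc M))"
        using mn by (auto intro!: le_imp_inverse_le)
      have "norm (sq m - sq n)^2 \<le> 2*(2*d+1)*(inverse (real (Suc m)) + inverse (real (Suc n)))"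
        by (rule key) (use sq in \<open>auto intro: less_imp_le simp: inverse_le_1_iff\<close>)
      also have "\<dots> \<le> 2*(2*d+1)*(2*inverse (real (Suc M)))"
        using im d0 by (intro mult_left_mono) (linarith, simp)
      also have "\<dots> < 2*(2*d+1)*(2*(e^2 / (4*(2*d+1))))"
        using M d0 by (intro mult_strict_left_mono) auto
      also have "\<dots> = e^2" using d0 by (simp add: field_simps)
      finally show "norm (sq m - sq n) < e" using \<open>0<e\<close> by (meson abs_le_iff less_le_trans norm_ge_zero power2_less_imp_less le_less)
    qed
  qed
  then obtain v where v: "sq \<longlonglongrightarrow> v" using Cauchy_convergent_iff convergent_def by blast
  have vS: "v \<in> S" using closed_sequentially[OF S(2)] sq(1) v by blast
  have "norm (x - v) \<le> d"
  proof (rule LIMSEQ_le)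
    show "(\<lambda>n. norm (x - sq n)) \<longlonglongrightarrow> norm (x - v)" by (intro tendsto_intros v)
    show "(\<lambda>n. d + inverse (real (Suc n))) \<longlonglongrightarrow> d" by (rule LIMSEQ_inverse_real_of_nat_add)
    show "\<exists>N. \<forall>n\<ge>N. norm (x - sq n) \<le> d + inverse (real (Suc n))" using sq(2) less_imp_le by blast
  qed
  hence minim: "norm (x - v) \<le> norm (x - s)" if "s \<in> S" for s using dle[OF that] by linarith
  have "x - v \<in> orthogonal_comp S"
    unfolding orthogonal_comp_def orthogonal_def
  proof (clarify)
    fix y assume yS: "y \<in> S"
    define w where "w = x - v"
    define c where "c = inner y w"
    show "inner y (x - v) = 0"
    proof (cases "y = 0")
      case True thus ?thesis by simp
    next
      case False
      hence yy: "inner y y > 0" by simp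
      define t where "t = c / inner y y"
      have "v + t *\<^sub>R y \<in> S" using vS yS S by (simp add: subspace_add subspace_scale)
      hence "norm w ^2 \<le> norm (w - t *\<^sub>R y)^2"
        using minim[of "v + t *\<^sub>R y"] by (intro power_mono) (auto simp: w_def algebra_simps)
      also have "norm (w - t *\<^sub>R y)^2 = norm w ^2 - 2*t*c + t^2 * inner y y"
        unfolding power2_norm_eq_inner by (simp add: inner_diff c_def inner_commute algebra_simps power2_eq_square)
      also have "\<dots> = norm w^2 - c^2 / inner y y"
        using yy by (simp add: t_def field_simps power2_eq_square)
      finally have "c^2 / inner y y \<le> 0" by simp
      hence "c^2 \<le> 0" using yy by (simp add: divide_le_0_iff)
      hence "c = 0" by simp
      thus ?thesis by (simp add: c_def w_def)
    qed
  qed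
  thus ?thesis using vS by blast
qed

lemma oproj_props:
  fixes S :: "'a::{real_inner,complete_space} set"
  assumes "subspace S" "closed S"
  shows "oproj S x \<in> S" "x - oproj S x \<in> orthogonal_comp S"
  using proj_exists[OF assms, of x] oproj_eq[OF assms(1)] by auto

lemma obproj_eq:
  assumes "direct_sum_UNIV A W" "subspace A" "subspace W" "v \<in> A" "x - v \<in> W"
  shows "obproj A W x = v"
  unfolding obproj_def
proof (rule the_equality)
  show "v \<in> A \<and> x - v \<in> W" using assms by blast
  fix v' assume h: "v' \<in> A \<and> x - v' \<in> W"
  have "v' - v \<in> A" using h assms by (simp add: subspace_diff)
  moreover have "v' - v = (x - v) - (x - v')" by simp
  hence "v' - v \<in> W" using h assms by (metis subspace_diff)
  ultimately have "v' - v \<in> A \<inter> W" by blast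
  hence "v' - v = 0" using assms(1) unfolding direct_sum_UNIV_def by blast
  thus "v' = v" by simp
qed

lemma obproj_props:
  assumes "direct_sum_UNIV A W" "subspace A" "subspace W"
  shows "obproj A W x \<in> A" "x - obproj A W x \<in> W"
proof -
  obtain a b where "a \<in> A" "b \<in> W" "x = a + b" using assms(1) unfolding direct_sum_UNIV_def by blast
  hence "obproj A W x = a" using obproj_eq[OF assms, of a x] by simp
  thus "obproj A W x \<in> A" "x - obproj A W x \<in> W" using \<open>a\<in>A\<close> \<open>b\<in>W\<close> \<open>x = a+b\<close> by auto
qed



lemma closed_graph_bound:
  fixes Q :: "'a::{real_normed_vector,complete_space} \<Rightarrow> 'b::{real_normed_vector,complete_space}"
  assumes diff: "\<And>a b. Q (a - b) = Q a - Q b"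
    and scale: "\<And>c a. Q (c *\<^sub>R a) = c *\<^sub>R Q a"
    and closedg: "\<And>f x y. f \<longlonglongrightarrow> x \<Longrightarrow> (\<lambda>n. Q (f n)) \<longlonglongrightarrow> y \<Longrightarrow> Q x = y"
  shows "\<exists>C. \<forall>x. norm (Q x) \<le> C * norm x"
proof -
  have Q0: "Q 0 = 0" using diff[of 0 0] by simp
  define F where "F n = closure {x. norm (Q x) \<le> real n}" for n
  have "\<exists>N. interior (F N) \<noteq> {}"
  proof (rule ccontr)
    assume "\<not> (\<exists>N. interior (F N) \<noteq> {})"
    hence e: "\<And>N. interior (F N) = {}" by blast
    have "euclidean interior_of \<Union>(range F) = {}"
    proof (rule Baire_category_alt)
      show "\<And>T. T \<in> range F \<Longrightarrow> closedin euclidean T \<and> euclidean interior_of T = {}"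
        using e by (auto simp: F_def closed_closedin[symmetric])
    qed (auto simp: completely_metrizable_space_euclidean)
    moreover have "\<Union>(range F) = UNIV"
    proof -
      have "x \<in> F (nat \<lceil>norm (Q x)\<rceil>)" for x
        unfolding F_def using closure_subset real_nat_ceiling_ge by fastforce
      thus ?thesis by blast
    qed
    ultimately show False by simp
  qed
  then obtain N x0 where "x0 \<in> interior (F N)" by blast
  then obtain r where r: "r > 0" "ball x0 r \<subseteq> F N" by (meson mem_interior)
  have approx: "\<exists>u. norm (Q u) \<le> 2 * real N \<and> norm (w - u) < e" if "norm w < r" "e > 0" for w e
  proof -
    have "x0 + w \<in> F N" "x0 \<in> F N" using r that by (auto simp: dist_norm)
    then obtain a b where ab: "norm (Q a) \<le> real N" "dist a (x0 + w) < e/2"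
         "norm (Q b) \<le> real N" "dist b x0 < e/2"
      unfolding F_def closure_approachable using \<open>e > 0\<close> by (metis half_gt_zero mem_Collect_eq)
    have "norm (Q (a - b)) \<le> 2 * real N"
      using ab diff[of a b] norm_triangle_ineq4[of "Q a" "Q b"] by simp
    moreover have "norm (w - (a - b)) < e"
    proof -
      have "w - (a - b) = (b - x0) - (a - (x0 + w))" by (simp add: algebra_simps)
      hence "norm (w - (a - b)) \<le> norm (b - x0) + norm (a - (x0 + w))"
        by (metis norm_triangle_ineq4)
      thus ?thesis using ab by (simp add: dist_norm)
    qed
    ultimately show ?thesis by blast
  qed
  define K where "K = 4 * real N / r"
  have K0: "K \<ge> 0" using r by (simp add: K_def)
  have step: "\<exists>u. norm (Q u) \<le> K * norm w \<and> norm (w - u) \<le> norm w / 2" for w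
  proof (cases "w = 0")
    case True thus ?thesis using Q0 by (intro exI[of _ 0]) simp
  next
    case False
    hence nw: "norm w > 0" by simp
    define t where "t = r / (2 * norm w)"
    have t0: "t > 0" using r nw by (simp add: t_def)
    have "norm (t *\<^sub>R w) < r" using r nw t0 by (simp add: t_def)
    then obtain u' where u': "norm (Q u') \<le> 2 * real N" "norm (t *\<^sub>R w - u') < r / 4"
      using approx[of "t *\<^sub>R w" "r/4"] r by auto
    define u where "u = (1/t) *\<^sub>R u'"
    have "Q u = (1/t) *\<^sub>R Q u'" by (simp add: u_def scale)
    hence "norm (Q u) = norm (Q u') / t" using t0 by simp
    also have "\<dots> \<le> 2 * real N / t" using u' t0 by (simp add: divide_right_mono)
    also have "\<dots> = K * norm w" using r nw by (simp add: K_def t_def field_simps)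
    finally have 1: "norm (Q u) \<le> K * norm w" .
    have "w - u = (1/t) *\<^sub>R (t *\<^sub>R w - u')" using t0 by (simp add: u_def algebra_simps)
    hence "norm (w - u) = norm (t *\<^sub>R w - u') / t" using t0 by simp
    also have "\<dots> \<le> (r/4) / t" by (rule divide_right_mono) (use u'(2) t0 in auto)
    also have "\<dots> = norm w / 2" using r nw by (simp add: t_def field_simps)
    finally show ?thesis using 1 by blast
  qed
  then obtain U where U: "\<And>w. norm (Q (U w)) \<le> K * norm w" "\<And>w. norm (w - U w) \<le> norm w / 2"
    by metis
  have bound: "norm (Q z) \<le> (2 * K) * norm z" for z
  proof -
    define zs where "zs n = ((\<lambda>w. w - U w) ^^ n) z" for n
    have zsS: "zs (Suc n) = zs n - U (zs n)" for n by (simp add: zs_def)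
    have zsb: "norm (zs n) \<le> norm z / 2^n" for n
    proof (induction n)
      case 0 thus ?case by (simp add: zs_def)
    next
      case (Suc n)
      have "norm (zs (Suc n)) \<le> norm (zs n) / 2" using U(2) zsS by simp
      also have "\<dots> \<le> norm z / 2^n / 2" using Suc by simp
      finally show ?case by simp
    qed
    define qs where "qs n = Q (z - zs n)" for n
    have qdiff: "norm (qs (Suc n) - qs n) \<le> K * norm z / 2^n" for n
    proof -
      have "qs (Suc n) - qs n = Q (zs n - zs (Suc n))"
        by (simp add: qs_def diff[symmetric] algebra_simps)
      also have "\<dots> = Q (U (zs n))" by (simp add: zsS)
      finally have "norm (qs (Suc n) - qs n) \<le> K * norm (zs n)" using U(1) by simp
      also have "\<dots> \<le> K * (norm z / 2^n)" using zsb K0 by (intro mult_left_mono) auto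
      finally show ?thesis by simp
    qed
    have qb: "norm (qs n - qs m) \<le> 2 * K * norm z * (1 / 2^m - 1 / 2^n)" if "m \<le> n" for m n
      using that
    proof (induction n rule: dec_induct)
      case base thus ?case by simp
    next
      case (step n)
      have "norm (qs (Suc n) - qs m) \<le> norm (qs (Suc n) - qs n) + norm (qs n - qs m)"
        using norm_triangle_ineq[of "qs (Suc n) - qs n" "qs n - qs m"] by simp
      also have "\<dots> \<le> K * norm z / 2^n + 2 * K * norm z * (1 / 2^m - 1 / 2^n)"
        using qdiff step.IH by (intro add_mono) auto
      also have "\<dots> = 2 * K * norm z * (1 / 2^m - 1 / 2^(Suc n))"
        by (simp add: field_simps)
      finally show ?case .
    qed
    have "Cauchy qs"
    proof (rule CauchyI)
      fix e :: real assume e: "e > 0"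
      have "0 < e / (2 * K * norm z + 1)" using e K0 by (simp add: add_nonneg_pos)
      then obtain M where M: "(1/2::real)^M < e / (2 * K * norm z + 1)"
        using real_arch_pow_inv[of "e / (2 * K * norm z + 1)" "1/2"] by auto
      show "\<exists>M. \<forall>m\<ge>M. \<forall>n\<ge>M. norm (qs m - qs n) < e"
      proof (intro exI allI impI)
        fix m n assume mn: "M \<le> m" "M \<le> n"
        have gen: "norm (qs a - qs b) \<le> 2 * K * norm z * (1/2)^M" if "M \<le> a" "M \<le> b" "b \<le> a" for a b
        proof -
          have "norm (qs a - qs b) \<le> 2 * K * norm z * (1 / 2^b - 1 / 2^a)" using qb that by simp
          also have "\<dots> \<le> 2 * K * norm z * (1/2)^M"
          proof (intro mult_left_mono)
            have "(1::real) / 2^b \<le> 1 / 2^M" using that by (intro divide_left_mono power_increasing) auto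
            moreover have "(0::real) \<le> 1 / 2^a" by simp
            moreover have "(1/2::real)^M = 1/2^M" by (simp add: power_divide)
            ultimately show "1 / 2^b - 1 / 2^a \<le> (1/2::real)^M" by linarith
          qed (use K0 in auto)
          finally show ?thesis .
        qed
        have "norm (qs m - qs n) \<le> 2 * K * norm z * (1/2)^M"
          using gen[of m n] gen[of n m] mn norm_minus_commute[of "qs m" "qs n"] by (cases "n \<le> m") auto
        also have "\<dots> \<le> (2 * K * norm z + 1) * (1/2)^M" by (simp add: mult_right_mono)
        also have "\<dots> < (2 * K * norm z + 1) * (e / (2 * K * norm z + 1))"
          using M K0 by (intro mult_strict_left_mono) (auto simp: add_nonneg_pos)
        also have "\<dots> = e"
        proof -
          have "2 * K * norm z + 1 > 0" using K0 by (simp add: add_nonneg_pos)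
          thus ?thesis by simp
        qed
        finally show "norm (qs m - qs n) < e" .
      qed
    qed
    then obtain s where s: "qs \<longlonglongrightarrow> s" using Cauchy_convergent_iff convergent_def by blast
    have "zs \<longlonglongrightarrow> 0"
    proof -
      have "(\<lambda>n. norm z / 2^n) \<longlonglongrightarrow> 0"
        by (rule LIMSEQ_divide_realpow_zero) simp
      thus ?thesis by (rule Lim_null_comparison[rotated]) (use zsb in \<open>simp add: always_eventually\<close>)
    qed
    hence "(\<lambda>n. z - zs n) \<longlonglongrightarrow> z" using tendsto_diff[OF tendsto_const] by fastforce
    hence Qz: "Q z = s" using closedg s unfolding qs_def by blast
    have "norm s \<le> 2 * K * norm z"
    proof (rule tendsto_upperbound[OF tendsto_norm[OF s]])
      show "\<forall>\<^sub>F n in sequentially. norm (qs n) \<le> 2 * K * norm z"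
      proof (intro always_eventually allI)
        fix n
        have "qs 0 = 0" by (simp add: qs_def zs_def Q0)
        hence "norm (qs n) = norm (qs n - qs 0)" by simp
        also have "\<dots> \<le> 2 * K * norm z * (1 / 2^0 - 1 / 2^n)" by (rule qb) simp
        also have "\<dots> \<le> 2 * K * norm z" using K0 by (simp add: mult_left_le)
        finally show "norm (qs n) \<le> 2 * K * norm z" .
      qed
    qed simp
    thus ?thesis using Qz by simp
  qed
  thus ?thesis by blast
qed



lemma R1:
  fixes p q lam :: real
  assumes "0 < p" "0 \<le> q" "0 \<le> lam" "lam \<le> 1"
  shows "p / sqrt (p^2 + q^2) \<le> p / sqrt (p^2 + lam^2 * q^2)"
proof -
  have "lam^2 \<le> 1" using assms by (simp add: power_le_one)
  hence "lam^2 * q^2 \<le> q^2" using assms by (simp add: mult_left_le_one_le)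
  hence "sqrt (p^2 + lam^2 * q^2) \<le> sqrt (p^2 + q^2)" by simp
  moreover have "0 < sqrt (p^2 + lam^2 * q^2)" using assms by (simp add: add_pos_nonneg)
  ultimately show ?thesis using assms by (intro divide_left_mono) auto
qed

lemma R2:
  fixes p q lam cA sA :: real
  assumes "0 < p" "0 \<le> q" "0 < cA" "cA \<le> p / sqrt (p^2 + q^2)" "q / sqrt (p^2 + q^2) \<le> sA"
  shows "1 / (1 + lam^2 * (sA^2 / cA^2)) \<le> (p / sqrt (p^2 + lam^2 * q^2))^2"
proof -
  define n where "n = sqrt (p^2 + q^2)"
  have n0: "n > 0" using assms by (simp add: n_def add_pos_nonneg)
  have h1: "cA * n \<le> p" using assms n0 by (simp add: n_def pos_le_divide_eq)
  have h2: "q \<le> sA * n" using assms n0 by (simp add: n_def pos_divide_le_eq)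
  have sA0: "0 \<le> sA" using assms n0 by (smt (verit, best) divide_nonneg_nonneg n_def)
  have "cA * q \<le> cA * (sA * n)" using h2 assms by (simp add: mult_left_mono)
  also have "\<dots> = sA * (cA * n)" by simp
  also have "\<dots> \<le> sA * p" using h1 sA0 by (simp add: mult_left_mono)
  finally have k: "cA * q \<le> sA * p" .
  have k2: "(cA * q)^2 \<le> (sA * p)^2" using k assms by (intro power_mono) auto
  have pos: "0 < p^2 + lam^2 * q^2" using assms by (simp add: add_pos_nonneg)
  have lhs: "1 / (1 + lam^2 * (sA^2 / cA^2)) = cA^2 / (cA^2 + lam^2 * sA^2)"
    using assms by (simp add: field_simps)
  have rhs: "(p / sqrt (p^2 + lam^2 * q^2))^2 = p^2 / (p^2 + lam^2 * q^2)"
    using pos by (simp add: power_divide)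
  have "cA^2 * (p^2 + lam^2 * q^2) \<le> p^2 * (cA^2 + lam^2 * sA^2)"
  proof -
    have "lam^2 * (cA * q)^2 \<le> lam^2 * (sA * p)^2" using k2 by (simp add: mult_left_mono)
    thus ?thesis by (simp add: algebra_simps power_mult_distrib)
  qed
  moreover have "0 < cA^2 + lam^2 * sA^2" using assms by (simp add: add_pos_nonneg)
  ultimately have "cA^2 / (cA^2 + lam^2 * sA^2) \<le> p^2 / (p^2 + lam^2 * q^2)"
    using pos by (simp add: divide_le_eq_1 frac_le field_simps mult.commute)
  thus ?thesis using lhs rhs by simp
qed

lemma R3:
  fixes p q lam cA sA :: real
  assumes "0 < p" "0 \<le> q" "0 \<le> cA" "cA \<le> q / sqrt (p^2 + q^2)" "p / sqrt (p^2 + q^2) \<le> sA"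
  shows "(p / sqrt (p^2 + lam^2 * q^2))^2 \<le> 1 / (1 + lam^2 * (cA^2 / sA^2))"
proof -
  define n where "n = sqrt (p^2 + q^2)"
  have n0: "n > 0" using assms by (simp add: n_def add_pos_nonneg)
  have h1: "cA * n \<le> q" using assms n0 by (simp add: n_def pos_le_divide_eq)
  have h2: "p \<le> sA * n" using assms n0 by (simp add: n_def pos_divide_le_eq)
  have sA0: "0 < sA" using h2 n0 assms by (smt (verit) mult_nonpos_nonneg)
  have "p * cA \<le> sA * n * cA" using h2 assms by (simp add: mult_right_mono)
  also have "\<dots> = sA * (cA * n)" by simp
  also have "\<dots> \<le> sA * q" using h1 sA0 by (simp add: mult_left_mono)
  finally have k: "p * cA \<le> sA * q" .
  have k2: "(p * cA)^2 \<le> (sA * q)^2" using k assms by (intro power_mono) auto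
  have pos: "0 < p^2 + lam^2 * q^2" using assms by (simp add: add_pos_nonneg)
  have rhs: "1 / (1 + lam^2 * (cA^2 / sA^2)) = sA^2 / (sA^2 + lam^2 * cA^2)"
    using sA0 by (simp add: field_simps)
  have lhs: "(p / sqrt (p^2 + lam^2 * q^2))^2 = p^2 / (p^2 + lam^2 * q^2)"
    using pos by (simp add: power_divide)
  have "p^2 * (sA^2 + lam^2 * cA^2) \<le> sA^2 * (p^2 + lam^2 * q^2)"
  proof -
    have "lam^2 * (p * cA)^2 \<le> lam^2 * (sA * q)^2" using k2 by (simp add: mult_left_mono)
    thus ?thesis by (simp add: algebra_simps power_mult_distrib)
  qed
  moreover have "0 < sA^2 + lam^2 * cA^2" using sA0 by (simp add: add_pos_nonneg)
  ultimately have "p^2 / (p^2 + lam^2 * q^2) \<le> sA^2 / (sA^2 + lam^2 * cA^2)"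
    using pos by (simp add: field_simps mult.commute)
  thus ?thesis using lhs rhs by simp
qed



theorem mainTheorem6:
  fixes S A :: "'a::{real_inner, complete_space} set" and lam :: real
  assumes "subspace S" "closed S" "subspace A" "closed A"
    and "S \<noteq> {0}" "A \<noteq> {0}" "orthogonal_comp S \<noteq> {0}" "orthogonal_comp A \<noteq> {0}"
    and "direct_sum_UNIV A (orthogonal_comp S)"
    and "0 \<le> lam" "lam \<le> 1"
  defines "B \<equiv> (\<lambda>x. lam *\<^sub>R obproj A (orthogonal_comp S) x + (1 - lam) *\<^sub>R oproj S x)"
  shows "1 / (1 + lam\<^sup>2 * ((sin_angle A S)\<^sup>2 / (cos_angle A S)\<^sup>2)) \<le> (cos_angle (range B) S)\<^sup>2
       \<and> (cos_angle (range B) S)\<^sup>2 \<le> 1 / (1 + lam\<^sup>2 * ((cos_angle A (orthogonal_comp S))\<^sup>2 / (sin_angle A (orthogonal_comp S))\<^sup>2))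
       \<and> cos_angle (range B) S \<ge> cos_angle A S"
proof -
  note subS = assms(1) and clS = assms(2) and subA = assms(3) and clA = assms(4)
  note ds = assms(9) and lam0 = assms(10) and lam1 = assms(11)
  define W where "W = orthogonal_comp S"
  define P where "P = oproj S"
  define Q where "Q = obproj A W"
  have subW: "subspace W" unfolding W_def by (rule subspace_orthogonal_comp)
  have clW: "closed W" unfolding W_def by (rule closed_orth)
  have dsW: "direct_sum_UNIV A W" using ds by (simp add: W_def)
  have PS: "P x \<in> S" for x using oproj_props[OF subS clS] by (simp add: P_def)
  have PW: "x - P x \<in> W" for x using oproj_props[OF subS clS] by (simp add: P_def W_def)
  have QA: "Q x \<in> A" for x using obproj_props[OF dsW subA subW] by (simp add: Q_def)
  have QW: "x - Q x \<in> W" for x using obproj_props[OF dsW subA subW] by (simp add: Q_def)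
  have Peq: "v \<in> S \<Longrightarrow> x - v \<in> W \<Longrightarrow> P x = v" for x v
    using oproj_eq[OF subS] by (simp add: P_def W_def)
  have Qeq: "v \<in> A \<Longrightarrow> x - v \<in> W \<Longrightarrow> Q x = v" for x v
    using obproj_eq[OF dsW subA subW] by (simp add: Q_def)
  have orthPW: "orthogonal (P x) (y - P y)" for x y
    using PS PW unfolding W_def orthogonal_comp_def by blast
  have orthSW: "orthogonal s w" if "s \<in> S" "w \<in> W" for s w
    using that unfolding W_def orthogonal_comp_def by blast
  have Pyth: "norm x ^2 = norm (P x)^2 + norm (x - P x)^2" for x
    using norm_add_Pythagorean[OF orthPW[of x x]] by simp
  have AW0: "x = 0" if "x \<in> A" "x \<in> W" for x
    using that dsW unfolding direct_sum_UNIV_def by blast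
  have Qdiff: "Q (a - b) = Q a - Q b" for a b
  proof (rule Qeq)
    show "Q a - Q b \<in> A" using QA subA by (simp add: subspace_diff)
    have "a - b - (Q a - Q b) = (a - Q a) - (b - Q b)" by (simp add: algebra_simps)
    thus "a - b - (Q a - Q b) \<in> W" using QW[of a] QW[of b] subspace_diff[OF subW] by metis
  qed
  have Qscale: "Q (c *\<^sub>R a) = c *\<^sub>R Q a" for c a
  proof (rule Qeq)
    show "c *\<^sub>R Q a \<in> A" using QA subA by (simp add: subspace_scale)
    have "c *\<^sub>R a - c *\<^sub>R Q a = c *\<^sub>R (a - Q a)" by (simp add: algebra_simps)
    thus "c *\<^sub>R a - c *\<^sub>R Q a \<in> W" using QW[of a] subspace_scale[OF subW] by metis
  qed
  have Qclosed: "Q x = y" if f: "f \<longlonglongrightarrow> x" and g: "(\<lambda>n. Q (f n)) \<longlonglongrightarrow> y" for f x y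
  proof (rule Qeq)
    show "y \<in> A" by (rule closed_sequentially[OF clA _ g]) (simp add: QA)
    have "(\<lambda>n. f n - Q (f n)) \<longlonglongrightarrow> x - y" using f g by (rule tendsto_diff)
    thus "x - y \<in> W" by (rule closed_sequentially[OF clW, rotated]) (simp add: QW)
  qed
  have "\<exists>C. \<forall>x. norm (Q x) \<le> C * norm x"
    apply (rule closed_graph_bound)
      apply (rule Qdiff)
     apply (rule Qscale)
    apply (erule (1) Qclosed)
    done
  then obtain C where C: "\<And>x. norm (Q x) \<le> C * norm x" by blast
  define C1 where "C1 = max C 1"
  have C1: "C1 > 0" "\<And>x. norm (Q x) \<le> C1 * norm x"
  proof -
    show "C1 > 0" by (simp add: C1_def)
    fix x :: 'a
    have "C * norm x \<le> C1 * norm x" by (rule mult_right_mono) (auto simp: C1_def)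
    thus "norm (Q x) \<le> C1 * norm x" using C[of x] by linarith
  qed
  have QAid: "x \<in> A \<Longrightarrow> Q x = x" for x using Qeq[of x x] subW subspace_0 by auto
  have QmP: "Q z - P z \<in> W" for z
  proof -
    have "Q z - P z = (z - P z) - (z - Q z)" by simp
    thus ?thesis using PW QW subW by (metis subspace_diff)
  qed
  have PQ: "P (Q z) = P z" for z
    using Peq[OF PS] QmP by simp
  have QP: "Q (P z) = Q z" for z
  proof (rule Qeq[OF QA])
    have "P z - Q z = (z - Q z) - (z - P z)" by simp
    thus "P z - Q z \<in> W" using PW QW subW by (metis subspace_diff)
  qed
  have P0: "P 0 = 0" using Peq[of 0 0] subS subW by (simp add: subspace_0)
  have Pnz: "P x \<noteq> 0" if "x \<in> A" "x \<noteq> 0" for x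
  proof
    assume "P x = 0"
    hence "x \<in> W" using PW[of x] by simp
    thus False using AW0 that by blast
  qed
  have lowb: "norm x \<le> C1 * norm (P x)" if "x \<in> A" for x
    using C1(2)[of "P x"] QP[of x] QAid[OF that] by simp
  have oW: "oproj W x = x - P x" for x
  proof (rule oproj_eq[OF subW PW])
    show "x - (x - P x) \<in> orthogonal_comp W"
      using PS orthogonal_comp_subset[of S] by (auto simp: W_def)
  qed
  have oWW: "oproj (orthogonal_comp W) x = P x" for x
  proof (rule oproj_eq[OF subspace_orthogonal_comp])
    show "P x \<in> orthogonal_comp W" using PS orthogonal_comp_subset[of S] by (auto simp: W_def)
    show "x - P x \<in> orthogonal_comp (orthogonal_comp W)" using PW orthogonal_comp_subset[of W] by auto
  qed
  define val where "val x = norm (P x) / sqrt (norm (P x)^2 + lam^2 * norm (x - P x)^2)" for x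
  define X where "X = A - {0}"
  have Bform: "P (B z) = P (Q z) \<and> norm (B z) = sqrt (norm (P (Q z))^2 + lam^2 * norm (Q z - P (Q z))^2)
       \<and> B z = P (Q z) + lam *\<^sub>R (Q z - P (Q z))" for z
  proof -
    have Bz: "B z = P z + lam *\<^sub>R (Q z - P z)"
      by (simp add: B_def P_def Q_def W_def algebra_simps)
    have "B z - P z \<in> W" using Bz QmP subW by (simp add: subspace_scale)
    hence PB: "P (B z) = P z" using Peq[OF PS] by blast
    have "orthogonal (P z) (lam *\<^sub>R (Q z - P z))"
      using orthSW[OF PS QmP] by (simp add: orthogonal_clauses)
    hence "norm (B z)^2 = norm (P z)^2 + norm (lam *\<^sub>R (Q z - P z))^2"
      unfolding Bz by (rule norm_add_Pythagorean)
    hence "norm (B z)^2 = norm (P z)^2 + lam^2 * norm (Q z - P z)^2"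
      by (simp add: power_mult_distrib)
    hence "norm (B z) = sqrt (norm (P z)^2 + lam^2 * norm (Q z - P z)^2)"
      by (metis norm_ge_zero real_sqrt_abs abs_of_nonneg)
    thus ?thesis using PB PQ Bz by simp
  qed
  have rangeB: "(\<lambda>b. norm (P b) / norm b) ` (range B - {0}) = val ` X"
  proof
    show "(\<lambda>b. norm (P b) / norm b) ` (range B - {0}) \<subseteq> val ` X"
    proof (rule subsetI)
      fix v assume "v \<in> (\<lambda>b. norm (P b) / norm b) ` (range B - {0})"
      then obtain z where nz: "B z \<noteq> 0" and vz: "v = norm (P (B z)) / norm (B z)" by auto
      have "Q z \<noteq> 0" using nz Bform[of z] P0 by auto
      hence "Q z \<in> X" using QA by (simp add: X_def)
      thus "v \<in> val ` X" using Bform[of z] vz by (auto simp: val_def)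
    qed
    show "val ` X \<subseteq> (\<lambda>b. norm (P b) / norm b) ` (range B - {0})"
    proof clarify
      fix x assume x: "x \<in> X"
      hence xA: "x \<in> A" "x \<noteq> 0" by (auto simp: X_def)
      have e: "Q x = x" using QAid xA by simp
      have "P (B x) = P x" using conjunct1[OF Bform[of x]] e by simp
      hence "B x \<noteq> 0" using Pnz[OF xA] P0 by auto
      moreover have "val x = norm (P (B x)) / norm (B x)"
        using conjunct1[OF Bform[of x]] conjunct1[OF conjunct2[OF Bform[of x]]] e by (simp add: val_def)
      ultimately show "val x \<in> (\<lambda>b. norm (P b) / norm b) ` (range B - {0})" by blast
    qed
  qed
  have X0: "X \<noteq> {}" using assms(6) subA subspace_0 by (auto simp: X_def)
  define fp where "fp x = norm (P x) / norm x" for x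
  define fq where "fq x = norm (x - P x) / norm x" for x
  have cBe: "cos_angle (range B) S = Inf (val ` X)"
  proof -
    have "cos_angle (range B) S = Inf ((\<lambda>b. norm (P b)/norm b) ` (range B - {0}))"
      unfolding cos_angle_def P_def by (rule arg_cong[where f=Inf]) auto
    thus ?thesis using rangeB by simp
  qed
  have cAe: "cos_angle A S = Inf (fp ` X)"
    unfolding cos_angle_def fp_def P_def X_def by (rule arg_cong[where f=Inf]) auto
  have sAe: "sin_angle A S = Sup (fq ` X)"
    unfolding sin_angle_def fq_def X_def W_def[symmetric] by (rule arg_cong[where f=Sup]) (auto simp: oW)
  have cA'e: "cos_angle A W = Inf (fq ` X)"
    unfolding cos_angle_def fq_def X_def by (rule arg_cong[where f=Inf]) (auto simp: oW)
  have sA'e: "sin_angle A W = Sup (fp ` X)"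
    unfolding sin_angle_def fp_def X_def by (rule arg_cong[where f=Sup]) (auto simp: oWW)
  have nx: "norm x = sqrt (norm (P x)^2 + norm (x - P x)^2)" for x
  proof -
    have "sqrt (norm x ^2) = norm x" by simp
    thus ?thesis using Pyth[of x] by simp
  qed
  have xfacts: "0 < norm (P x) \<and> fp x = norm (P x) / sqrt (norm (P x)^2 + norm (x - P x)^2)
      \<and> fq x = norm (x - P x) / sqrt (norm (P x)^2 + norm (x - P x)^2)
      \<and> 0 \<le> fp x \<and> fp x \<le> 1 \<and> 0 \<le> fq x \<and> fq x \<le> 1 \<and> 0 \<le> val x \<and> 1 / C1 \<le> fp x" if "x \<in> X" for x
  proof -
    have xA: "x \<in> A" "x \<noteq> 0" using that by (auto simp: X_def)
    have p0: "0 < norm (P x)" using Pnz[OF xA] by simp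
    have nx0: "norm x > 0" using xA by simp
    have "norm (P x) \<le> norm x" "norm (x - P x) \<le> norm x"
      using Pyth[of x] by (auto intro: power2_le_imp_le)
    hence le1: "fp x \<le> 1" "fq x \<le> 1" using nx0 by (auto simp: fp_def fq_def)
    have "norm x \<le> C1 * norm (P x)" using lowb[OF xA(1)] .
    hence "1 / C1 \<le> fp x" using C1(1) nx0 p0 unfolding fp_def by (simp add: field_simps)
    moreover have "fp x = norm (P x) / sqrt (norm (P x)^2 + norm (x - P x)^2)"
      unfolding fp_def nx[of x] ..
    moreover have "fq x = norm (x - P x) / sqrt (norm (P x)^2 + norm (x - P x)^2)"
      unfolding fq_def nx[of x] ..
    ultimately show ?thesis using p0 le1 by (simp add: fp_def fq_def val_def)
  qed
  have bfp: "bdd_below (fp ` X)" "bdd_above (fp ` X)"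
    by (rule bdd_belowI2[where m=0], use xfacts in blast) (rule bdd_aboveI2[where M=1], use xfacts in blast)
  have bfq: "bdd_below (fq ` X)" "bdd_above (fq ` X)"
    by (rule bdd_belowI2[where m=0], use xfacts in blast) (rule bdd_aboveI2[where M=1], use xfacts in blast)
  have bval: "bdd_below (val ` X)" by (rule bdd_belowI2[where m=0]) (use xfacts in blast)
  define cB where "cB = Inf (val ` X)"
  define cA where "cA = Inf (fp ` X)"
  define sA where "sA = Sup (fq ` X)"
  define cA' where "cA' = Inf (fq ` X)"
  define sA' where "sA' = Sup (fp ` X)"
  have T3: "cA \<le> cB" unfolding cB_def
  proof (rule cINF_greatest[OF X0])
    fix x assume x: "x \<in> X"
    have "cA \<le> fp x" unfolding cA_def by (rule cINF_lower[OF bfp(1) x])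
    also have "fp x \<le> val x" using xfacts[OF x] R1[OF _ _ lam0 lam1] by (simp add: val_def)
    finally show "cA \<le> val x" .
  qed
  have cApos: "0 < cA"
  proof -
    have "1 / C1 \<le> cA" unfolding cA_def by (rule cINF_greatest[OF X0]) (use xfacts in blast)
    thus ?thesis using C1(1) by (smt (verit) divide_pos_pos)
  qed
  define L where "L = 1 / (1 + lam^2 * (sA^2 / cA^2))"
  have L0: "0 \<le> L" unfolding L_def by (simp add: add_nonneg_pos)
  have T1: "L \<le> cB^2"
  proof -
    have "sqrt L \<le> cB" unfolding cB_def
    proof (rule cINF_greatest[OF X0])
      fix x assume x: "x \<in> X"
      have "cA \<le> fp x" unfolding cA_def by (rule cINF_lower[OF bfp(1) x])
      moreover have "fq x \<le> sA" unfolding sA_def by (rule cSUP_upper[OF x bfq(2)])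
      ultimately have "L \<le> (val x)^2" unfolding L_def val_def
        using xfacts[OF x] cApos by (intro R2) auto
      hence "sqrt L \<le> sqrt ((val x)^2)" by (rule real_sqrt_le_mono)
      thus "sqrt L \<le> val x" using xfacts[OF x] by simp
    qed
    moreover have "0 \<le> sqrt L" using L0 by simp
    ultimately have "(sqrt L)^2 \<le> cB^2" by (rule power_mono)
    thus ?thesis using L0 by simp
  qed
  obtain x0 where x0: "x0 \<in> X" using X0 by blast
  have T2: "cB^2 \<le> 1 / (1 + lam^2 * (cA'^2 / sA'^2))"
  proof -
    have "cB \<le> val x0" unfolding cB_def by (rule cINF_lower[OF bval x0])
    moreover have "0 \<le> cB" unfolding cB_def by (rule cINF_greatest[OF X0]) (use xfacts in blast)
    ultimately have "cB^2 \<le> (val x0)^2" by (rule power_mono)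
    also have "\<dots> \<le> 1 / (1 + lam^2 * (cA'^2 / sA'^2))"
    proof -
      have "cA' \<le> fq x0" unfolding cA'_def by (rule cINF_lower[OF bfq(1) x0])
      moreover have "0 \<le> cA'" unfolding cA'_def by (rule cINF_greatest[OF X0]) (use xfacts in blast)
      moreover have "fp x0 \<le> sA'" unfolding sA'_def by (rule cSUP_upper[OF x0 bfp(2)])
      ultimately show ?thesis unfolding val_def using xfacts[OF x0] by (intro R3) auto
    qed
    finally show ?thesis .
  qed
  show ?thesis
    using T1 T2 T3 unfolding L_def cB_def cA_def sA_def cA'_def sA'_def
    by (simp add: cBe cAe sAe cA'e[unfolded W_def] sA'e[unfolded W_def])
qed
end
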